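(* Assume there exist covering templates $\mathbf x^{(1)},\dots,\mathbf x^{(M)}\in\mathbb R^s$ and representation functions $f_{\theta_1},\dots,f_{\theta_M}$ such that the matrix $F\in\mathbb R^{M\times M}$, $F_{i,d}=f_{\theta_d}(\mathbf x^{(i)})$, has pairwise distinct rows and has a column that is constant and non-zero (i.e. some $d$ and $c\neq0$ with $f_{\theta_d}(\mathbf x^{(i)})=c$ for all $i\in[M]$). Consider the shallow fully-connected network with ReLU activation whose $y$-th score function is $$h^{S(fc)}_y(X)=\sum_{z=1}^Z a^y_z\max\Big\{0,\sum_{i=1}^N\sum_{d=1}^M A^z_{i,d}\,f_{\theta_d}(\mathbf x_i)\Big\},\qquad A^z\in\mathbb R^{N\times M},\ \mathbf a^y\in\mathbb R^Z.$$ Then this network is universal: for every tensor $\mathcal A\in\mathbb R^{M\times\cdots\times M}$ of order $N$ there exist $Z$ and weights $\{A^z\}_{z\in[Z]}$, $\mathbf a^y$ such that $\mathcal A(h^{S(fc)}_y)=\mathcal A$ (in fact $Z\ge M^N$ suffices).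
   Context: Inputs are $X=(\mathbf x_1,\dots,\mathbf x_N)\in(\mathbb R^s)^N$. For templates $\mathbf x^{(1)},\dots,\mathbf x^{(M)}\in\mathbb R^s$, the grid tensor of $h:(\mathbb R^s)^N\to\mathbb R$ is the order-$N$ tensor with $\mathcal A(h)_{d_1,\dots,d_N}=h(\mathbf x^{(d_1)},\dots,\mathbf x^{(d_N)})$. Templates are covering if score functions are identified whenever their grid tensors coincide; a network is universal if (w.r.t. covering templates) every tensor is the grid tensor of one of its score functions. *)

theory Defs
  imports "HOL-Analysis.Analysis"
begin

text \<open>Conventions: indices are 0-based. Inputs X = (x_1..x_N) are functions
  nat => real^'s (only positions i < N are used). An order-N tensor with mode sizes M
  is a function on index lists ds with length ds = N and all entries < M.\<close>

definition score_fc ::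
  "nat \<Rightarrow> nat \<Rightarrow> (nat \<Rightarrow> 'x \<Rightarrow> real) \<Rightarrow> nat \<Rightarrow>
   (nat \<Rightarrow> nat \<Rightarrow> nat \<Rightarrow> real) \<Rightarrow> (nat \<Rightarrow> real) \<Rightarrow> (nat \<Rightarrow> 'x) \<Rightarrow> real" where
  "score_fc N M f Z A a X =
     (\<Sum>z<Z. a z * max 0 (\<Sum>i<N. \<Sum>d<M. A z i d * f d (X i)))"

definition grid_tensor :: "(nat \<Rightarrow> 'x) \<Rightarrow> ((nat \<Rightarrow> 'x) \<Rightarrow> real) \<Rightarrow> nat list \<Rightarrow> real" where
  "grid_tensor tmpl h ds = h (\<lambda>i. tmpl (ds ! i))"

definition tensor_index :: "nat \<Rightarrow> nat \<Rightarrow> nat list \<Rightarrow> bool" where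
  "tensor_index N M ds \<longleftrightarrow> length ds = N \<and> set ds \<subseteq> {..<M}"

end

theory Submission imports Defs begin

lemma relu_interp:
  fixes P :: "real set"
  assumes "finite P"
  shows "\<forall>g. \<exists>K t c. K \<le> card P \<and> (\<forall>x\<in>P. (\<Sum>k<K. c k * max 0 (x - t k)) = g x)"
  using assms
proof (induct P rule: finite_linorder_max_induct)
  case empty
  then show ?case by (intro allI exI[of _ 0]) auto
next
  case (insert b A)
  show ?case
  proof
    fix g :: "real \<Rightarrow> real"
    from insert(3) obtain K t c where K: "K \<le> card A"
      and h: "\<forall>x\<in>A. (\<Sum>k<K. c k * max 0 (x - t k)) = g x" by blast
    define t0 where "t0 = Max (insert (b-1) A)"
    have t0b: "t0 < b" unfolding t0_def using insert(1,2) by (subst Max_less_iff) auto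
    have xt0: "x \<le> t0" if "x \<in> A" for x unfolding t0_def using insert(1) that by auto
    define S where "S = (\<Sum>k<K. c k * max 0 (b - t k))"
    define t' where "t' = t(K := t0)"
    define c' where "c' = c(K := (g b - S) / (b - t0))"
    have eq: "(\<Sum>k<Suc K. c' k * max 0 (x - t' k)) = (\<Sum>k<K. c k * max 0 (x - t k)) + c' K * max 0 (x - t0)" for x
      by (simp add: t'_def c'_def)
    have bnA: "b \<notin> A" using insert(2) by auto
    show "\<exists>K t c. K \<le> card (insert b A) \<and> (\<forall>x\<in>insert b A. (\<Sum>k<K. c k * max 0 (x - t k)) = g x)"
    proof (intro exI conjI ballI)
      show "Suc K \<le> card (insert b A)" using K bnA insert(1) by simp
      fix x assume "x \<in> insert b A"
      then show "(\<Sum>k<Suc K. c' k * max 0 (x - t' k)) = g x"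
      proof
        assume "x = b"
        then show ?thesis using t0b unfolding eq by (simp add: c'_def S_def[symmetric])
      next
        assume "x \<in> A"
        then show ?thesis unfolding eq using h xt0[of x] by simp
      qed
    qed
  qed
qed

definition lin :: "nat \<Rightarrow> nat \<Rightarrow> (nat \<Rightarrow> nat \<Rightarrow> real) \<Rightarrow> (nat \<Rightarrow> nat \<Rightarrow> real) \<Rightarrow> real" where
  "lin N M W G = (\<Sum>i<N. \<Sum>d<M. W i d * G i d)"

lemma lin_upd:
  assumes "i0 < N" "d0 < M"
  shows "lin N M (\<lambda>i d. W i d + (if i = i0 \<and> d = d0 then u else 0)) G = lin N M W G + u * G i0 d0"
proof -
  have "lin N M (\<lambda>i d. W i d + (if i = i0 \<and> d = d0 then u else 0)) G
      = lin N M W G + (\<Sum>i<N. \<Sum>d<M. (if i = i0 \<and> d = d0 then u * G i d else 0))"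
    unfolding lin_def by (simp add: sum.distrib[symmetric] distrib_right if_distrib[of "\<lambda>x. x * _"] cong: if_cong)
  also have "(\<Sum>i<N. \<Sum>d<M. (if i = i0 \<and> d = d0 then u * G i d else 0)) = u * G i0 d0"
  proof -
    have "(\<Sum>i<N. \<Sum>d<M. (if i = i0 \<and> d = d0 then u * G i d else 0))
       = (\<Sum>i<N. if i = i0 then (\<Sum>d<M. if d = d0 then u * G i0 d0 else 0) else 0)"
      by (rule sum.cong) (auto intro: sum.cong)
    then show ?thesis using assms by simp
  qed
  finally show ?thesis .
qed

lemma avoid:
  assumes "finite S"
  and "\<forall>G\<in>S. \<exists>i<N. \<exists>d<M. G i d \<noteq> 0"
  shows "\<exists>W. \<forall>G\<in>S. lin N M W G \<noteq> 0"
  using assms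
proof (induct S rule: finite_induct)
  case empty
  then show ?case by simp
next
  case (insert G S)
  then obtain W where W: "\<forall>H\<in>S. lin N M W H \<noteq> 0" by auto
  from insert(4) obtain i0 d0 where i0: "i0 < N" "d0 < M" "G i0 d0 \<noteq> 0" by auto
  show ?case
  proof (cases "lin N M W G = 0")
    case False
    then show ?thesis using W by auto
  next
    case True
    define B where "B = insert 0 ((\<lambda>H. - lin N M W H / H i0 d0) ` S)"
    have "finite B" unfolding B_def using insert(1) by simp
    then obtain u where u: "u \<notin> B" using ex_new_if_finite[OF infinite_UNIV_char_0] by blast
    define W' where "W' = (\<lambda>i d. W i d + (if i = i0 \<and> d = d0 then u else 0))"
    have L: "lin N M W' H = lin N M W H + u * H i0 d0" for H
      unfolding W'_def using lin_upd[OF i0(1,2)] by blast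
    have "\<forall>H\<in>insert G S. lin N M W' H \<noteq> 0"
    proof
      fix H assume "H \<in> insert G S"
      then show "lin N M W' H \<noteq> 0"
      proof
        assume "H = G" then show ?thesis using L True u i0(3) by (simp add: B_def)
      next
        assume HS: "H \<in> S"
        show ?thesis
        proof
          assume z: "lin N M W' H = 0"
          have hz: "H i0 d0 \<noteq> 0" using z L W HS by force
          then have "u = - lin N M W H / H i0 d0" using z L by (simp add: field_simps)
          then show False using u HS by (simp add: B_def)
        qed
      qed
    qed
    then show ?thesis by blast
  qed
qed

theorem claim7:
  fixes tmpl :: "nat \<Rightarrow> real ^ 's" and f :: "nat \<Rightarrow> real ^ 's \<Rightarrow> real"
    and M N :: nat
  assumes N_pos: "N \<ge> 1"
    and rows_distinct: "\<forall>i<M. \<forall>j<M. i \<noteq> j \<longrightarrow> (\<exists>d<M. f d (tmpl i) \<noteq> f d (tmpl j))"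
    and const_col: "\<exists>d<M. \<exists>c::real. c \<noteq> 0 \<and> (\<forall>i<M. f d (tmpl i) = c)"
  shows "\<forall>T :: nat list \<Rightarrow> real. \<forall>Z \<ge> M ^ N. \<exists>A a.
           \<forall>ds. tensor_index N M ds \<longrightarrow>
             grid_tensor tmpl (score_fc N M f Z A a) ds = T ds"
proof (intro allI impI)
  fix T :: "nat list \<Rightarrow> real" and Z :: nat
  assume Z: "M ^ N \<le> Z"
  from const_col obtain d0 c0 where d0: "d0 < M" "c0 \<noteq> 0" "\<forall>i<M. f d0 (tmpl i) = c0" by blast
  define F where "F j d = f d (tmpl j)" for j d
  define I where "I = {xs. set xs \<subseteq> {..<M} \<and> length xs = N}"
  have I_iff: "ds \<in> I \<longleftrightarrow> tensor_index N M ds" for ds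
    unfolding I_def tensor_index_def by auto
  have finI: "finite I" unfolding I_def by (rule finite_lists_length_eq) simp
  have cardI: "card I = M ^ N" unfolding I_def by (simp add: card_lists_length_eq)
  define Gd where "Gd ds es = (\<lambda>i d. F (ds!i) d - F (es!i) d)" for ds es :: "nat list"
  define S where "S = (\<lambda>(ds,es). Gd ds es) ` {p \<in> I \<times> I. fst p \<noteq> snd p}"
  have finS: "finite S" unfolding S_def using finI by simp
  have nzS: "\<forall>G\<in>S. \<exists>i<N. \<exists>d<M. G i d \<noteq> 0"
  proof
    fix G assume "G \<in> S"
    then obtain ds es where de: "ds \<in> I" "es \<in> I" "ds \<noteq> es" and G: "G = Gd ds es"
      unfolding S_def by auto
    have len: "length ds = N" "length es = N" using de unfolding I_def by auto
    obtain i where i: "i < N" "ds!i \<noteq> es!i"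
      using de(3) len nth_equalityI by metis
    have "ds!i \<in> set ds" "es!i \<in> set es" using i len by auto
    then have "ds!i < M" "es!i < M" using de unfolding I_def by auto
    then obtain d where "d < M" "f d (tmpl (ds!i)) \<noteq> f d (tmpl (es!i))"
      using rows_distinct i(2) by blast
    then show "\<exists>i<N. \<exists>d<M. G i d \<noteq> 0" using i(1) by (auto simp: G Gd_def F_def)
  qed
  obtain W where W: "\<forall>G\<in>S. lin N M W G \<noteq> 0" using avoid[OF finS nzS] by blast
  define s where "s ds = lin N M W (\<lambda>i d. F (ds!i) d)" for ds
  have sdiff: "lin N M W (Gd ds es) = s ds - s es" for ds es
    unfolding s_def lin_def Gd_def by (simp add: sum_subtractf right_diff_distrib)
  have inj: "inj_on s I"
  proof (rule inj_onI, rule ccontr)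
    fix ds es assume "ds \<in> I" "es \<in> I" "s ds = s es" "ds \<noteq> es"
    then have "Gd ds es \<in> S" unfolding S_def by force
    then show False using W sdiff \<open>s ds = s es\<close> by force
  qed
  define P where "P = s ` I"
  have finP: "finite P" unfolding P_def using finI by simp
  have cardP: "card P \<le> M ^ N" unfolding P_def using cardI card_image_le[OF finI, of s] by simp
  define g where "g x = T (the_inv_into I s x)" for x
  obtain K t c where K: "K \<le> card P" and tc: "\<forall>x\<in>P. (\<Sum>k<K. c k * max 0 (x - t k)) = g x"
    using relu_interp[OF finP] by blast
  have KZ: "K \<le> Z" using K cardP Z by simp
  define A where "A z i d = W i d + (if i = 0 \<and> d = d0 then - t z / c0 else 0)" for z i d
  define a where "a z = (if z < K then c z else 0)" for z
  show "\<exists>A a. \<forall>ds. tensor_index N M ds \<longrightarrow> grid_tensor tmpl (score_fc N M f Z A a) ds = T ds"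
  proof (intro exI allI impI)
    fix ds assume ti: "tensor_index N M ds"
    then have dsI: "ds \<in> I" using I_iff by simp
    have "ds!0 \<in> set ds" using ti N_pos unfolding tensor_index_def by auto
    then have ds0: "ds!0 < M" using ti unfolding tensor_index_def by auto
    have inner: "(\<Sum>i<N. \<Sum>d<M. A z i d * f d (tmpl (ds!i))) = s ds - t z" for z
    proof -
      have "(\<Sum>i<N. \<Sum>d<M. A z i d * f d (tmpl (ds!i))) = lin N M (A z) (\<lambda>i d. F (ds!i) d)"
        unfolding lin_def F_def by simp
      also have "\<dots> = s ds + (- t z / c0) * F (ds!0) d0"
        unfolding A_def s_def using lin_upd[of 0 N d0 M W "- t z / c0"] N_pos d0(1) by simp
      also have "\<dots> = s ds - t z" using d0 ds0 by (simp add: F_def)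
      finally show ?thesis .
    qed
    have "grid_tensor tmpl (score_fc N M f Z A a) ds
        = (\<Sum>z<Z. a z * max 0 (s ds - t z))"
      unfolding grid_tensor_def score_fc_def inner by simp
    also have "\<dots> = (\<Sum>z<K. c z * max 0 (s ds - t z))"
    proof -
      have "(\<Sum>z<Z. a z * max 0 (s ds - t z)) = (\<Sum>z<K. a z * max 0 (s ds - t z))"
        by (rule sum.mono_neutral_right) (use KZ in \<open>auto simp: a_def\<close>)
      then show ?thesis by (simp add: a_def)
    qed
    also have "\<dots> = g (s ds)" using tc dsI unfolding P_def by blast
    also have "\<dots> = T ds" unfolding g_def using the_inv_into_f_f[OF inj dsI] by simp
    finally show "grid_tensor tmpl (score_fc N M f Z A a) ds = T ds" .
  qed
qed

end
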